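(* Let $\Phi:\mathbb{R}^n\to(-\infty,\infty]$ be a proper lower semicontinuous convex function, and let $S\subset\mathbb{R}\times\mathbb{R}^n$ be a nonempty set with $\Phi(y)=\sup_{(\alpha,b)\in S}(\alpha+b\cdot y)$ for all $y\in\mathbb{R}^n$. Let $\psi:[0,\infty)\to[0,\infty)$ satisfy $\lim_{t\to\infty}\psi(t)/t=\infty$. Define, for $x\ge0$, $y\in\mathbb{R}^n$, $$\tilde\varphi(x,y):=\sup_{(\alpha,b)\in S}\bigl(\alpha+b\cdot y-\psi(|\alpha|+|b|)\,x\bigr).$$ Then $\tilde\varphi:[0,\infty)\times\mathbb{R}^n\to(-\infty,\infty]$ is convex and lower semicontinuous, $\tilde\varphi(0,y)=\Phi(y)$ for all $y$, $\tilde\varphi(x,y)<\infty$ for all $x>0$, $y\in\mathbb{R}^n$, $x\mapsto\tilde\varphi(x,y)$ is nonincreasing, and $\lim_{x\to0+}\tilde\varphi(x,y)=\Phi(y)$ for every $y\in\mathbb{R}^n$.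
   Context: A convex function is proper if it is not identically $+\infty$. $|\cdot|$ denotes the absolute value on $\mathbb{R}$ and the Euclidean norm on $\mathbb{R}^n$. *)

theory Defs
  imports "HOL-Analysis.Analysis"
begin

text \<open>Convexity of an extended-real valued function on a convex set D
  (values in (-infinity, infinity], so the ereal arithmetic below is unambiguous).\<close>
definition ereal_convex_on :: "'a::real_vector set \<Rightarrow> ('a \<Rightarrow> ereal) \<Rightarrow> bool" where
  "ereal_convex_on D f \<longleftrightarrow> convex D \<and>
     (\<forall>x\<in>D. \<forall>y\<in>D. \<forall>t::real. 0 < t \<and> t < 1 \<longrightarrow>
        f (t *\<^sub>R x + (1 - t) *\<^sub>R y) \<le> ereal t * f x + ereal (1 - t) * f y)"

definition ereal_lsc_on :: "'a::topological_space set \<Rightarrow> ('a \<Rightarrow> ereal) \<Rightarrow> bool" where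
  "ereal_lsc_on D f \<longleftrightarrow> (\<forall>z\<in>D. f z \<le> Liminf (at z within D) f)"

definition ereal_proper :: "('a \<Rightarrow> ereal) \<Rightarrow> bool" where
  "ereal_proper f \<longleftrightarrow> (\<forall>x. f x \<noteq> -\<infinity>) \<and> (\<exists>x. f x \<noteq> \<infinity>)"

end

theory Submission
  imports Defs
begin

theorem mainTheorem6:
  fixes \<Phi> :: "real ^ 'n \<Rightarrow> ereal"
    and S :: "(real \<times> (real ^ 'n)) set"
    and \<psi> :: "real \<Rightarrow> real"
    and \<phi> :: "real \<times> (real ^ 'n) \<Rightarrow> ereal"
  assumes proper: "ereal_proper \<Phi>"
    and lsc: "ereal_lsc_on UNIV \<Phi>"
    and cvx: "ereal_convex_on UNIV \<Phi>"
    and S_ne: "S \<noteq> {}"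
    and rep: "\<And>y. \<Phi> y = (SUP (\<alpha>, b)\<in>S. ereal (\<alpha> + b \<bullet> y))"
    and psi_nonneg: "\<And>t. t \<ge> 0 \<Longrightarrow> \<psi> t \<ge> 0"
    and psi_superlin: "filterlim (\<lambda>t. \<psi> t / t) at_top at_top"
    and phi_def: "\<And>x y. \<phi> (x, y) =
        (SUP (\<alpha>, b)\<in>S. ereal (\<alpha> + b \<bullet> y - \<psi> (\<bar>\<alpha>\<bar> + norm b) * x))"
  shows "(ereal_convex_on ({0..} \<times> UNIV) \<phi>) \<and>
    (ereal_lsc_on ({0..} \<times> UNIV) \<phi>) \<and>
    (\<forall>x\<ge>0. \<forall>y. \<phi> (x, y) \<noteq> -\<infinity>) \<and>
    (\<forall>y. \<phi> (0, y) = \<Phi> y) \<and>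
    (\<forall>x>0. \<forall>y. \<phi> (x, y) < \<infinity>) \<and>
    (\<forall>y. \<forall>x x'. 0 \<le> x \<and> x \<le> x' \<longrightarrow> \<phi> (x', y) \<le> \<phi> (x, y)) \<and>
    (\<forall>y. ((\<lambda>x. \<phi> (x, y)) \<longlongrightarrow> \<Phi> y) (at_right 0))"
proof -
  define g :: "real \<times> (real ^ 'n) \<Rightarrow> real \<times> (real ^ 'n) \<Rightarrow> real" where
    "g s p = fst s + snd s \<bullet> snd p - \<psi> (\<bar>fst s\<bar> + norm (snd s)) * fst p" for s p
  have phi: "\<phi> p = (SUP s\<in>S. ereal (g s p))" for p
    by (cases p) (simp add: phi_def g_def split_def)
  have Phi: "\<Phi> y = (SUP s\<in>S. ereal (fst s + snd s \<bullet> y))" for y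
    by (simp add: rep split_def)
  have upper: "s \<in> S \<Longrightarrow> ereal (g s p) \<le> \<phi> p" for s p
    unfolding phi by (rule SUP_upper)
  have C1: "ereal_convex_on ({0..} \<times> UNIV) \<phi>"
    unfolding ereal_convex_on_def
  proof (intro conjI ballI allI impI)
    show "convex ({0::real..} \<times> (UNIV :: (real^'n) set))"
      by (intro convex_Times convex_real_interval convex_UNIV)
    fix p q :: "real \<times> (real ^ 'n)" and t :: real
    assume t: "0 < t \<and> t < 1"
    show "\<phi> (t *\<^sub>R p + (1 - t) *\<^sub>R q) \<le> ereal t * \<phi> p + ereal (1 - t) * \<phi> q"
      unfolding phi[of "t *\<^sub>R p + (1 - t) *\<^sub>R q"]
    proof (rule SUP_least)
      fix s assume s: "s \<in> S"
      have "g s (t *\<^sub>R p + (1 - t) *\<^sub>R q) = t * g s p + (1 - t) * g s q"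
        by (simp add: g_def inner_add_right algebra_simps)
      hence "ereal (g s (t *\<^sub>R p + (1 - t) *\<^sub>R q)) = ereal t * ereal (g s p) + ereal (1 - t) * ereal (g s q)"
        by simp
      also have "\<dots> \<le> ereal t * \<phi> p + ereal (1 - t) * \<phi> q"
        using t upper[OF s, of p] upper[OF s, of q]
        by (intro add_mono ereal_mult_left_mono) auto
      finally show "ereal (g s (t *\<^sub>R p + (1 - t) *\<^sub>R q)) \<le> ereal t * \<phi> p + ereal (1 - t) * \<phi> q" .
    qed
  qed
  have C2: "ereal_lsc_on ({0..} \<times> UNIV) \<phi>"
    unfolding ereal_lsc_on_def
  proof
    fix z :: "real \<times> (real ^ 'n)"
    let ?F = "at z within ({0..} \<times> UNIV)"
    show "\<phi> z \<le> Liminf ?F \<phi>"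
      unfolding le_Liminf_iff
    proof (intro allI impI)
      fix y0 assume "y0 < \<phi> z"
      then obtain s where s: "s \<in> S" "y0 < ereal (g s z)"
        unfolding phi[of z] by (auto simp: less_SUP_iff)
      have "continuous_on UNIV (g s)"
        unfolding g_def by (intro continuous_intros)
      hence "((\<lambda>w. g s w) \<longlongrightarrow> g s z) ?F"
        by (meson UNIV_I continuous_on_def tendsto_within_subset subset_UNIV)
      hence "((\<lambda>w. ereal (g s w)) \<longlongrightarrow> ereal (g s z)) ?F"
        by (rule tendsto_ereal)
      hence "eventually (\<lambda>w. y0 < ereal (g s w)) ?F"
        using s(2) by (rule order_tendstoD(1))
      thus "eventually (\<lambda>w. y0 < \<phi> w) ?F"
        by (rule eventually_mono) (use upper[OF s(1)] in \<open>auto intro: less_le_trans\<close>)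
    qed
  qed
  have C3: "\<forall>x\<ge>0. \<forall>y. \<phi> (x, y) \<noteq> -\<infinity>"
  proof (intro allI impI)
    fix x :: real and y
    from S_ne obtain s where "s \<in> S" by auto
    from upper[OF this, of "(x,y)"] show "\<phi> (x, y) \<noteq> -\<infinity>" by auto
  qed
  have C4: "\<forall>y. \<phi> (0, y) = \<Phi> y"
    by (simp add: phi Phi g_def)
  have C5: "\<forall>x>0. \<forall>y. \<phi> (x, y) < \<infinity>"
  proof (intro allI impI)
    fix x :: real and y :: "real^'n"
    assume x: "x > 0"
    define c where "c = 1 + norm y"
    have c: "c > 0" unfolding c_def by (simp add: add_pos_nonneg)
    from psi_superlin have "eventually (\<lambda>t. \<psi> t / t \<ge> c / x) at_top"
      by (simp add: filterlim_at_top)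
    then obtain T where T: "\<And>t. t \<ge> T \<Longrightarrow> \<psi> t / t \<ge> c / x"
      by (auto simp: eventually_at_top_linorder)
    define T' where "T' = max T 1"
    have bnd: "g s (x, y) \<le> T' * c" for s
    proof -
      define u where "u = \<bar>fst s\<bar> + norm (snd s)"
      have u0: "u \<ge> 0" unfolding u_def by simp
      have "fst s + snd s \<bullet> y \<le> \<bar>fst s\<bar> + norm (snd s) * norm y"
        using norm_cauchy_schwarz[of "snd s" y] by linarith
      also have "\<dots> \<le> u * c"
        unfolding u_def c_def by (simp add: algebra_simps mult_left_mono)
      finally have A: "fst s + snd s \<bullet> y \<le> u * c" .
      show ?thesis
      proof (cases "u \<ge> T'")
        case True
        hence "u \<ge> T" "u > 0" unfolding T'_def by auto
        with T have "\<psi> u / u \<ge> c / x" by auto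
        hence "\<psi> u \<ge> u * c / x" using \<open>u > 0\<close> by (simp add: field_simps)
        hence "\<psi> u * x \<ge> u * c" using x by (simp add: field_simps)
        moreover have "T' * c \<ge> 0" using c unfolding T'_def by simp
        ultimately show ?thesis using A unfolding g_def u_def by simp
      next
        case False
        have "\<psi> u * x \<ge> 0" using psi_nonneg[OF u0] x by simp
        moreover have "u * c \<le> T' * c" using False c by simp
        ultimately show ?thesis using A unfolding g_def u_def by simp
      qed
    qed
    have "\<phi> (x, y) \<le> ereal (T' * c)"
      unfolding phi by (rule SUP_least) (use bnd in simp)
    thus "\<phi> (x, y) < \<infinity>" using le_less_trans by fastforce
  qed
  have mono: "\<phi> (x', y) \<le> \<phi> (x, y)" if "0 \<le> x" "x \<le> x'" for x x' y
    unfolding phi[of "(x', y)"]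
  proof (rule SUP_least)
    fix s assume s: "s \<in> S"
    have "\<psi> (\<bar>fst s\<bar> + norm (snd s)) \<ge> 0" by (simp add: psi_nonneg)
    hence "g s (x', y) \<le> g s (x, y)" using that unfolding g_def
      by (simp add: mult_left_mono)
    hence "ereal (g s (x', y)) \<le> ereal (g s (x, y))" by simp
    thus "ereal (g s (x', y)) \<le> \<phi> (x, y)" using upper[OF s, of "(x,y)"] by (rule order_trans)
  qed
  have C6: "\<forall>y. \<forall>x x'. 0 \<le> x \<and> x \<le> x' \<longrightarrow> \<phi> (x', y) \<le> \<phi> (x, y)"
    using mono by blast
  have C7: "((\<lambda>x. \<phi> (x, y)) \<longlongrightarrow> \<Phi> y) (at_right 0)" for y
  proof (rule order_tendstoI)
    fix a assume "a < \<Phi> y"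
    obtain s where s: "s \<in> S" "a < ereal (g s (0, y))"
    proof -
      have "a < (SUP s\<in>S. ereal (g s (0, y)))" using \<open>a < \<Phi> y\<close> C4 phi[of "(0,y)"] by simp
      thus ?thesis using that by (auto simp: less_SUP_iff)
    qed
    have "((\<lambda>x. g s (x, y)) \<longlongrightarrow> g s (0, y)) (at_right 0)"
      unfolding g_def by (intro tendsto_intros)
    hence "((\<lambda>x. ereal (g s (x, y))) \<longlongrightarrow> ereal (g s (0, y))) (at_right 0)"
      by (rule tendsto_ereal)
    hence "eventually (\<lambda>x. a < ereal (g s (x, y))) (at_right 0)"
      using s(2) by (rule order_tendstoD(1))
    thus "eventually (\<lambda>x. a < \<phi> (x, y)) (at_right 0)"
      by (rule eventually_mono) (use upper[OF s(1)] in \<open>auto intro: less_le_trans\<close>)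
  next
    fix a assume a: "\<Phi> y < a"
    have "eventually (\<lambda>x::real. x > 0) (at_right 0)"
      by (simp add: eventually_at_right_less)
    thus "eventually (\<lambda>x. \<phi> (x, y) < a) (at_right 0)"
    proof (rule eventually_mono)
      fix x :: real assume "x > 0"
      hence "\<phi> (x, y) \<le> \<phi> (0, y)" by (intro mono) auto
      moreover have "\<phi> (0, y) = \<Phi> y" using C4 by blast
      ultimately show "\<phi> (x, y) < a" using a by simp
    qed
  qed
  have C7': "\<forall>y. ((\<lambda>x. \<phi> (x, y)) \<longlongrightarrow> \<Phi> y) (at_right 0)" using C7 by blast
  show ?thesis by (intro conjI C1 C2 C3 C4 C5 C6 C7')
qed

end
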